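(* Let $(V_{\bar0},\alpha)$ be a finite-dimensional real vector space with a non-degenerate symmetric bilinear form $\alpha$, and let $V_{\bar1}$ be a real or complex module over the Clifford algebra $Cl(V_{\bar0},\alpha)$ (resp. over $Cl(V_{\bar0},\alpha)\otimes\mathbb{C}$), with Clifford multiplication $(v,s)\mapsto v\cdot s$. Let $\mathcal{W}=\{f_s\colon V_{\bar0}\to V_{\bar1}\mid s\in V_{\bar1},\ f_s(v)=v\cdot s\}\subseteq\underline{\mathrm{Hom}}(V_{\bar0},V_{\bar1})$. If $\dim V_{\bar0}\geq3$, then $\mathrm{Spin}(V_{\bar0})\ltimes\mathcal{W}\leqslant GL(V)$, $V=V_{\bar0}\oplus V_{\bar1}$, is of finite type.
   Context: $\mathrm{Spin}(V_{\bar0})$ acts on $V_{\bar0}$ through $SO(V_{\bar0},\alpha)$ and on $V_{\bar1}$ by Clifford multiplication, giving $\mathrm{Spin}(V_{\bar0})\leqslant GL(V_{\bar0})\times GL(V_{\bar1})$; $\mathcal{W}$ is a $\mathrm{Spin}(V_{\bar0})$-submodule of the odd part $\underline{\mathrm{Hom}}(V_{\bar0},V_{\bar1})$ of $\mathfrak{gl}(V)$ (maps extended by zero on $V_{\bar1}$), and $\mathrm{Spin}(V_{\bar0})\ltimes\mathcal{W}$ is the corresponding Lie supergroup with Lie superalgebra $\mathfrak{g}=\mathfrak{spin}(V_{\bar0})\oplus\mathcal{W}\subseteq\mathfrak{gl}(V)$. Prolongations: $\mathfrak{g}^{(0)}=\mathfrak{g}$, $\mathfrak{g}^{(k)}=\{X\in\underline{\mathrm{Hom}}(V,\mathfrak{g}^{(k-1)})\mid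 X(v)(w)=(-1)^{|v||w|}X(w)(v)\text{ for homogeneous }v,w\}$ for $k\geq1$. Finite type means $\mathfrak{g}^{(k)}=0$ for some $k$. *)

theory Defs
  imports "HOL-Analysis.Analysis"
begin

text \<open>V0 is the type 'a (a finite-dimensional real vector space, euclidean_space),
  V1 is the type 'b (a real vector space), V = V0 (+) V1 is the product type 'a * 'b.\<close>

definition nondegenerate_form :: "('a::real_vector \<Rightarrow> 'a \<Rightarrow> real) \<Rightarrow> bool" where
  "nondegenerate_form \<alpha> \<longleftrightarrow> (\<forall>x. (\<forall>y. \<alpha> x y = 0) \<longrightarrow> x = 0)"

definition symmetric_form :: "('a \<Rightarrow> 'a \<Rightarrow> real) \<Rightarrow> bool" where
  "symmetric_form \<alpha> \<longleftrightarrow> (\<forall>x y. \<alpha> x y = \<alpha> y x)"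

text \<open>A (real) module over the Clifford algebra Cl(V0,alpha), convention v.v = -alpha(v,v):
  by the universal property of the Clifford algebra this is the same as a bilinear
  map (v,s) \<mapsto> v.s with v.(v.s) = - alpha(v,v) s.\<close>
definition clifford_module ::
  "('a::real_vector \<Rightarrow> 'a \<Rightarrow> real) \<Rightarrow> ('a \<Rightarrow> 'b::real_vector \<Rightarrow> 'b) \<Rightarrow> bool" where
  "clifford_module \<alpha> cm \<longleftrightarrow> bilinear cm \<and> (\<forall>v s. cm v (cm v s) = - (\<alpha> v v) *\<^sub>R s)"

definition finite_dim_space :: "'b::real_vector itself \<Rightarrow> bool" where
  "finite_dim_space _ \<longleftrightarrow> (\<exists>B::'b set. finite B \<and> span B = UNIV)"

text \<open>Generator of spin(V0) \<subseteq> gl(V0) x gl(V1) attached to v \<wedge> w: it is the element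
  (1/4)(v.w - w.v) of the Clifford algebra; it acts on V0 by the commutator
  u \<mapsto> alpha(v,u) w - alpha(w,u) v (an element of so(V0,alpha)) and on V1 by
  Clifford multiplication s \<mapsto> (1/4)(v.(w.s) - w.(v.s)).\<close>
definition spin_gen ::
  "('a::real_vector \<Rightarrow> 'a \<Rightarrow> real) \<Rightarrow> ('a \<Rightarrow> 'b::real_vector \<Rightarrow> 'b) \<Rightarrow> 'a \<Rightarrow> 'a
     \<Rightarrow> ('a \<times> 'b \<Rightarrow> 'a \<times> 'b)" where
  "spin_gen \<alpha> cm v w = (\<lambda>(u, s).
      (\<alpha> v u *\<^sub>R w - \<alpha> w u *\<^sub>R v,
       (1/4) *\<^sub>R (cm v (cm w s) - cm w (cm v s))))"

definition spin_alg ::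
  "('a::real_vector \<Rightarrow> 'a \<Rightarrow> real) \<Rightarrow> ('a \<Rightarrow> 'b::real_vector \<Rightarrow> 'b) \<Rightarrow> ('a \<times> 'b \<Rightarrow> 'a \<times> 'b) set" where
  "spin_alg \<alpha> cm = {A. \<exists>(n::nat) (c::nat \<Rightarrow> real) v w.
      A = (\<lambda>x. \<Sum>i<n. c i *\<^sub>R spin_gen \<alpha> cm (v i) (w i) x)}"

definition W_map :: "('a::real_vector \<Rightarrow> 'b::real_vector \<Rightarrow> 'b) \<Rightarrow> 'b \<Rightarrow> ('a \<times> 'b \<Rightarrow> 'a \<times> 'b)" where
  "W_map cm s = (\<lambda>(u, t). (0, cm u s))"

definition W_space :: "('a::real_vector \<Rightarrow> 'b::real_vector \<Rightarrow> 'b) \<Rightarrow> ('a \<times> 'b \<Rightarrow> 'a \<times> 'b) set" where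
  "W_space cm = {W_map cm s | s. True}"

definition spinW_alg ::
  "('a::real_vector \<Rightarrow> 'a \<Rightarrow> real) \<Rightarrow> ('a \<Rightarrow> 'b::real_vector \<Rightarrow> 'b) \<Rightarrow> ('a \<times> 'b \<Rightarrow> 'a \<times> 'b) set" where
  "spinW_alg \<alpha> cm = {(\<lambda>x. A x + B x) | A B. A \<in> spin_alg \<alpha> cm \<and> B \<in> W_space cm}"

text \<open>Homogeneous parts of V = V0 (+) V1: parity False = even (V0), True = odd (V1).\<close>
definition par_part :: "bool \<Rightarrow> ('a::real_vector \<times> 'b::real_vector) set" where
  "par_part p = (if p then {(0, y) | y. True} else {(x, 0) | x. True})"

text \<open>An element X of g^(k) (\<subseteq> Hom(V, Hom(V, ..., gl(V)))) is represented by
  the function F on lists with F [v0,...,vk,u] = X(v0)...(vk)(u) and F xs = 0 for lists of any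
  other length. Then X(v) is represented by (\<lambda>xs. F (v # xs)) and X(v)(w) by
  (\<lambda>xs. F (v # w # xs)) (for k = 1 this is the vector X(v)(w) = F [v, w]).\<close>
fun prolong ::
  "('a::real_vector \<times> 'b::real_vector \<Rightarrow> 'a \<times> 'b) set \<Rightarrow> nat
     \<Rightarrow> (('a \<times> 'b) list \<Rightarrow> 'a \<times> 'b) set" where
  "prolong g 0 = {F. \<exists>A\<in>g. \<forall>xs. F xs = (case xs of [u] \<Rightarrow> A u | _ \<Rightarrow> 0)}"
| "prolong g (Suc k) = {F.
      (\<forall>xs. length xs \<noteq> k + 2 \<longrightarrow> F xs = 0) \<and>
      (\<forall>xs. linear (\<lambda>v. F (v # xs))) \<and>
      (\<forall>v. (\<lambda>xs. F (v # xs)) \<in> prolong g k) \<and>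
      (\<forall>p q v w. v \<in> par_part p \<and> w \<in> par_part q \<longrightarrow>
          (\<lambda>xs. F (v # w # xs)) = (\<lambda>xs. (if p \<and> q then -1 else 1) *\<^sub>R F (w # v # xs)))}"

definition finite_type :: "('a::real_vector \<times> 'b::real_vector \<Rightarrow> 'a \<times> 'b) set \<Rightarrow> bool" where
  "finite_type g \<longleftrightarrow> (\<exists>k. prolong g k = {\<lambda>_. 0})"

end

theory Submission
  imports Defs
begin

locale cliff =
  fixes \<alpha> :: "'a::euclidean_space \<Rightarrow> 'a \<Rightarrow> real" and cm :: "'a \<Rightarrow> 'b::real_vector \<Rightarrow> 'b"
  assumes bil: "bilinear \<alpha>" and sym: "symmetric_form \<alpha>" and nd: "nondegenerate_form \<alpha>"
    and cl: "clifford_module \<alpha> cm" and dim: "DIM('a) \<ge> 3"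
begin

lemma cmbil: "bilinear cm" using cl by (simp add: clifford_module_def)
lemma cm_sq: "cm v (cm v s) = - (\<alpha> v v) *\<^sub>R s" using cl by (simp add: clifford_module_def)
lemma asym: "\<alpha> x y = \<alpha> y x" using sym by (simp add: symmetric_form_def)

lemma lin_cm1: "linear (\<lambda>x. cm x t)" using cmbil by (simp add: bilinear_def)
lemma lin_cm2: "linear (\<lambda>t. cm x t)" using cmbil by (simp add: bilinear_def)
lemma lin_a1: "linear (\<lambda>x. \<alpha> x t)" using bil by (simp add: bilinear_def)
lemma lin_a2: "linear (\<lambda>t. \<alpha> x t)" using bil by (simp add: bilinear_def)

lemmas cm_simps = bilinear_ladd[OF cmbil] bilinear_radd[OF cmbil] bilinear_lmul[OF cmbil]
  bilinear_rmul[OF cmbil] bilinear_lsub[OF cmbil] bilinear_rsub[OF cmbil]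
  bilinear_lneg[OF cmbil] bilinear_rneg[OF cmbil] bilinear_lzero[OF cmbil] bilinear_rzero[OF cmbil]
lemmas a_simps = bilinear_ladd[OF bil] bilinear_radd[OF bil] bilinear_lmul[OF bil]
  bilinear_rmul[OF bil] bilinear_lsub[OF bil] bilinear_rsub[OF bil]
  bilinear_lneg[OF bil] bilinear_rneg[OF bil] bilinear_lzero[OF bil] bilinear_rzero[OF bil]

lemma cm_sum1: "cm (sum f S) t = (\<Sum>i\<in>S. cm (f i) t)"
  using linear_sum[OF lin_cm1] .
lemma cm_sum2: "cm x (sum f S) = (\<Sum>i\<in>S. cm x (f i))"
  using linear_sum[OF lin_cm2] .
lemma a_sum1: "\<alpha> (sum f S) t = (\<Sum>i\<in>S. \<alpha> (f i) t)"
  using linear_sum[OF lin_a1] .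
lemma a_sum2: "\<alpha> x (sum f S) = (\<Sum>i\<in>S. \<alpha> x (f i))"
  using linear_sum[OF lin_a2] .

lemma anti: "cm x (cm y s) + cm y (cm x s) = - (2 * \<alpha> x y) *\<^sub>R s"
proof -
  have l: "cm (x+y) (cm (x+y) s) = cm x (cm x s) + (cm x (cm y s) + cm y (cm x s)) + cm y (cm y s)"
    by (simp add: cm_simps add.assoc)
  have r: "\<alpha> (x+y) (x+y) = \<alpha> x x + 2 * \<alpha> x y + \<alpha> y y"
    by (simp add: a_simps asym[of y x])
  have e: "- (\<alpha> (x+y) (x+y)) *\<^sub>R s = - (\<alpha> x x) *\<^sub>R s + - (2 * \<alpha> x y) *\<^sub>R s + - (\<alpha> y y) *\<^sub>R s"
    unfolding r by (simp add: algebra_simps)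
  have "cm x (cm x s) + (cm x (cm y s) + cm y (cm x s)) + cm y (cm y s)
     = - (\<alpha> x x) *\<^sub>R s + - (2 * \<alpha> x y) *\<^sub>R s + - (\<alpha> y y) *\<^sub>R s"
    using l cm_sq[of "x+y" s] e by simp
  hence "cm x (cm y s) + (cm y (cm x s) + (2 * \<alpha> x y) *\<^sub>R s) = 0"
    unfolding cm_sq by (simp add: algebra_simps)
  thus ?thesis by (simp add: eq_neg_iff_add_eq_0 add.assoc)
qed


lemma nd': "(\<And>y. \<alpha> x y = 0) \<Longrightarrow> x = 0" using nd by (auto simp: nondegenerate_form_def)

definition L :: "'a \<Rightarrow> 'a" where "L x = (\<Sum>j\<in>Basis. \<alpha> x j *\<^sub>R j)"

lemma L_lin: "linear L"
  by (rule linearI) (simp_all add: L_def a_simps scaleR_add_left sum.distrib scaleR_sum_right)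

lemma L_inner: "k \<in> Basis \<Longrightarrow> L x \<bullet> k = \<alpha> x k"
  by (simp add: L_def inner_sum_left inner_Basis if_distrib cong: if_cong)

lemma a_expand2: "\<alpha> x y = (\<Sum>k\<in>Basis. (y \<bullet> k) * \<alpha> x k)"
proof -
  have "\<alpha> x y = \<alpha> x (\<Sum>k\<in>Basis. (y \<bullet> k) *\<^sub>R k)" by (simp add: euclidean_representation)
  also have "\<dots> = (\<Sum>k\<in>Basis. (y \<bullet> k) * \<alpha> x k)" by (simp add: a_sum2 a_simps)
  finally show ?thesis .
qed

lemma L_inj: "inj L"
proof -
  have z: "x = 0" if h: "L x = 0" for x
  proof (rule nd')
    fix y
    have "\<alpha> x k = 0" if k: "k \<in> Basis" for k
      using L_inner[OF k, of x] h by simp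
    thus "\<alpha> x y = 0" by (simp add: a_expand2[of x y])
  qed
  show ?thesis
  proof (rule injI)
    fix x y assume "L x = L y"
    hence "L (x - y) = 0" by (simp add: linear_diff[OF L_lin])
    hence "x - y = 0" by (rule z)
    thus "x = y" by simp
  qed
qed

lemma L_surj: "surj L"
  by (rule linear_injective_imp_surjective[OF L_lin L_inj refl])

definition bd :: "'a \<Rightarrow> 'a" where "bd k = inv L k"

lemma L_bd: "L (bd k) = k"
  unfolding bd_def by (rule surj_f_inv_f[OF L_surj])

lemma bd_alpha: "\<alpha> (bd k) y = k \<bullet> y"
proof -
  have "\<alpha> (bd k) y = (\<Sum>j\<in>Basis. (y \<bullet> j) * \<alpha> (bd k) j)" by (rule a_expand2)
  also have "\<dots> = (\<Sum>j\<in>Basis. (k \<bullet> j) * (y \<bullet> j))"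
    by (rule sum.cong) (simp_all add: L_inner[symmetric] L_bd)
  also have "\<dots> = k \<bullet> y" by (rule euclidean_inner[symmetric])
  finally show ?thesis .
qed

lemma D1: "(\<Sum>k\<in>Basis. \<alpha> v k *\<^sub>R bd k) = v"
proof -
  have "(\<Sum>k\<in>Basis. \<alpha> v k *\<^sub>R bd k) - v = 0"
  proof (rule nd')
    fix y
    have "\<alpha> ((\<Sum>k\<in>Basis. \<alpha> v k *\<^sub>R bd k) - v) y = (\<Sum>k\<in>Basis. \<alpha> v k * (k \<bullet> y)) - \<alpha> v y"
      by (simp add: a_simps a_sum1 bd_alpha)
    also have "\<dots> = 0" by (simp add: a_expand2[of v y] inner_commute mult.commute)
    finally show "\<alpha> ((\<Sum>k\<in>Basis. \<alpha> v k *\<^sub>R bd k) - v) y = 0" .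
  qed
  thus ?thesis by simp
qed

lemma D2: "(\<Sum>k\<in>Basis. \<alpha> v (bd k) *\<^sub>R k) = v"
  by (simp add: asym[of v] bd_alpha inner_commute[of _ v] euclidean_representation)

lemma D3: "k \<in> Basis \<Longrightarrow> \<alpha> (bd k) k = 1"
  by (simp add: bd_alpha)


lemma clif_trace: "(\<Sum>k\<in>Basis. cm (bd k) (cm k s)) = - (real DIM('a)) *\<^sub>R s"
proof -
  let ?S1 = "(\<Sum>k\<in>Basis. cm (bd k) (cm k s))"
  let ?S2 = "(\<Sum>k\<in>Basis. cm k (cm (bd k) s))"
  have "?S1 + ?S2 = (\<Sum>k\<in>Basis. cm (bd k) (cm k s) + cm k (cm (bd k) s))"
    by (simp add: sum.distrib)
  also have "\<dots> = (\<Sum>k\<in>(Basis::'a set). (-2) *\<^sub>R s)"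
    by (rule sum.cong) (simp_all add: anti D3)
  also have "\<dots> = - (2 * (real DIM('a))) *\<^sub>R s" by (simp add: sum_constant_scaleR algebra_simps)
  finally have e1: "?S1 + ?S2 = - (2 * (real DIM('a))) *\<^sub>R s" .
  have "?S2 = (\<Sum>k\<in>Basis. cm (\<Sum>j\<in>Basis. \<alpha> k j *\<^sub>R bd j) (cm (bd k) s))"
    by (simp add: D1)
  also have "\<dots> = (\<Sum>k\<in>Basis. \<Sum>j\<in>Basis. \<alpha> k j *\<^sub>R cm (bd j) (cm (bd k) s))"
    by (simp add: cm_sum1 cm_simps)
  also have "\<dots> = (\<Sum>j\<in>Basis. \<Sum>k\<in>Basis. \<alpha> j k *\<^sub>R cm (bd j) (cm (bd k) s))"
    by (subst sum.swap) (simp add: asym)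
  also have "\<dots> = (\<Sum>j\<in>Basis. cm (bd j) (cm (\<Sum>k\<in>Basis. \<alpha> j k *\<^sub>R bd k) s))"
    by (simp add: cm_sum1 cm_sum2 cm_simps)
  also have "\<dots> = ?S1" by (simp add: D1)
  finally have "?S2 = ?S1" .
  have "?S1 = (1/2::real) *\<^sub>R (?S1 + ?S1)" by (rule scaleR_half_double[symmetric])
  also have "\<dots> = (1/2::real) *\<^sub>R (?S1 + ?S2)" using \<open>?S2 = ?S1\<close> by simp
  also have "\<dots> = (1/2::real) *\<^sub>R (- (2 * (real DIM('a))) *\<^sub>R s)" using e1 by simp
  also have "\<dots> = - (real DIM('a)) *\<^sub>R s" by simp
  finally show ?thesis .
qed

lemma nn_ge: "real DIM('a) \<ge> 3" using dim by simp

lemma cm_inj: assumes "\<And>b. cm b s = 0" shows "s = 0"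
proof -
  have "- (real DIM('a)) *\<^sub>R s = 0" unfolding clif_trace[symmetric] assms by (simp add: cm_simps)
  thus ?thesis using nn_ge by simp
qed

definition spinP :: "('a \<times> 'b \<Rightarrow> 'a \<times> 'b) \<Rightarrow> bool" where
"spinP B \<longleftrightarrow> linear B \<and> (\<forall>u s. B (u,s) = (fst (B (u,0)), snd (B (0,s)))) \<and>
   (\<forall>u u'. \<alpha> (fst (B (u,0))) u' = - \<alpha> u (fst (B (u',0)))) \<and>
   (\<forall>s. snd (B (0,s)) = (1/4) *\<^sub>R (\<Sum>k\<in>Basis. cm (bd k) (cm (fst (B (k,0))) s)))"

lemma spinPD: assumes "spinP B"
  shows "linear B" "B (u,s) = (fst (B (u,0)), snd (B (0,s)))"
    "\<alpha> (fst (B (u,0))) u' = - \<alpha> u (fst (B (u',0)))"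
    "snd (B (0,s)) = (1/4) *\<^sub>R (\<Sum>k\<in>Basis. cm (bd k) (cm (fst (B (k,0))) s))"
  using assms unfolding spinP_def by blast+

lemma spinP_gen: "spinP (spin_gen \<alpha> cm v w)"
proof -
  have lin: "linear (spin_gen \<alpha> cm v w)"
    by (rule linearI) (auto simp: spin_gen_def a_simps cm_simps algebra_simps split: prod.splits)
  have tr: "(\<Sum>k\<in>Basis. cm (bd k) (cm (\<alpha> v k *\<^sub>R w - \<alpha> w k *\<^sub>R v) s))
        = cm v (cm w s) - cm w (cm v s)" for s
  proof -
    have "(\<Sum>k\<in>Basis. cm (bd k) (cm (\<alpha> v k *\<^sub>R w - \<alpha> w k *\<^sub>R v) s))
        = cm (\<Sum>k\<in>Basis. \<alpha> v k *\<^sub>R bd k) (cm w s) - cm (\<Sum>k\<in>Basis. \<alpha> w k *\<^sub>R bd k) (cm v s)"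
      by (simp add: cm_sum1 cm_simps sum_subtractf)
    thus ?thesis by (simp add: D1)
  qed
  have G: "spin_gen \<alpha> cm v w (u,s) = (\<alpha> v u *\<^sub>R w - \<alpha> w u *\<^sub>R v, (1/4) *\<^sub>R (cm v (cm w s) - cm w (cm v s)))" for u s
    by (simp add: spin_gen_def)
  have G1: "fst (spin_gen \<alpha> cm v w (u,0)) = \<alpha> v u *\<^sub>R w - \<alpha> w u *\<^sub>R v" for u
    by (simp add: G)
  have G2: "snd (spin_gen \<alpha> cm v w (0,s)) = (1/4) *\<^sub>R (cm v (cm w s) - cm w (cm v s))" for s
    by (simp add: G)
  have p2: "\<forall>u s. spin_gen \<alpha> cm v w (u,s) = (fst (spin_gen \<alpha> cm v w (u,0)), snd (spin_gen \<alpha> cm v w (0,s)))"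
    by (simp add: G1 G2 G)
  have p3: "\<forall>u u'. \<alpha> (fst (spin_gen \<alpha> cm v w (u,0))) u' = - \<alpha> u (fst (spin_gen \<alpha> cm v w (u',0)))"
  proof (intro allI)
    fix u u'
    have e1: "\<alpha> u w = \<alpha> w u" and e2: "\<alpha> u v = \<alpha> v u" by (rule asym)+
    show "\<alpha> (fst (spin_gen \<alpha> cm v w (u,0))) u' = - \<alpha> u (fst (spin_gen \<alpha> cm v w (u',0)))"
      by (simp add: G1 a_simps e1 e2 algebra_simps)
  qed
  have p4: "\<forall>s. snd (spin_gen \<alpha> cm v w (0,s)) = (1/4) *\<^sub>R (\<Sum>k\<in>Basis. cm (bd k) (cm (fst (spin_gen \<alpha> cm v w (k,0))) s))"
    by (simp add: G1 G2 tr)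
  show ?thesis unfolding spinP_def using lin p2 p3 p4 by (intro conjI)
qed

lemma spinP_zero: "spinP (\<lambda>x. 0)"
  unfolding spinP_def
  by (intro conjI linear_zero) (simp_all add: cm_simps a_simps zero_prod_def)

lemma spinP_comb: assumes "spinP B" "spinP B'" shows "spinP (\<lambda>x. c *\<^sub>R B x + B' x)"
proof -
  have lB: "linear B" and lB': "linear B'" using spinPD(1) assms by auto
  have lin: "linear (\<lambda>x. c *\<^sub>R B x + B' x)"
    by (rule linearI) (simp_all add: linear_add[OF lB] linear_add[OF lB'] linear_scale[OF lB]
       linear_scale[OF lB'] algebra_simps)
  have d: "\<And>u s. B (u,s) = (fst (B (u,0)), snd (B (0,s)))"
     "\<And>u s. B' (u,s) = (fst (B' (u,0)), snd (B' (0,s)))" using spinPD(2) assms by auto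
  have a: "\<And>u u'. \<alpha> (fst (B (u,0))) u' = - \<alpha> u (fst (B (u',0)))"
     "\<And>u u'. \<alpha> (fst (B' (u,0))) u' = - \<alpha> u (fst (B' (u',0)))" using spinPD(3) assms by auto
  have t: "\<And>s. snd (B (0,s)) = (1/4) *\<^sub>R (\<Sum>k\<in>Basis. cm (bd k) (cm (fst (B (k,0))) s))"
     "\<And>s. snd (B' (0,s)) = (1/4) *\<^sub>R (\<Sum>k\<in>Basis. cm (bd k) (cm (fst (B' (k,0))) s))"
    using spinPD(4) assms by auto
  have dd: "c *\<^sub>R B (u,s) + B' (u,s) = (fst (c *\<^sub>R B (u,0) + B' (u,0)), snd (c *\<^sub>R B (0,s) + B' (0,s)))" for u s
    by (subst d(1), subst d(2), simp)
  have aa: "\<alpha> (fst (c *\<^sub>R B (u,0) + B' (u,0))) u' = - \<alpha> u (fst (c *\<^sub>R B (u',0) + B' (u',0)))" for u u'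
    by (simp add: a_simps a)
  have tt: "snd (c *\<^sub>R B (0,s) + B' (0,s)) = (1/4) *\<^sub>R (\<Sum>k\<in>Basis. cm (bd k) (cm (fst (c *\<^sub>R B (k,0) + B' (k,0))) s))" for s
    by (simp add: t cm_simps sum.distrib scaleR_sum_right algebra_simps)
  show ?thesis unfolding spinP_def using lin dd aa tt by simp
qed

lemma spinP_alg: assumes "A \<in> spin_alg \<alpha> cm" shows "spinP A"
proof -
  obtain n :: nat and c v w where A: "A = (\<lambda>x. \<Sum>i<n. c i *\<^sub>R spin_gen \<alpha> cm (v i) (w i) x)"
    using assms by (auto simp: spin_alg_def)
  have "spinP (\<lambda>x. \<Sum>i<m. c i *\<^sub>R spin_gen \<alpha> cm (v i) (w i) x)" for m
  proof (induction m)
    case 0 thus ?case using spinP_zero by simp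
  next
    case (Suc m)
    have "spinP (\<lambda>x. c m *\<^sub>R spin_gen \<alpha> cm (v m) (w m) x + (\<Sum>i<m. c i *\<^sub>R spin_gen \<alpha> cm (v i) (w i) x))"
      by (rule spinP_comb[OF spinP_gen Suc.IH])
    thus ?case by (simp add: add.commute)
  qed
  thus ?thesis using A by simp
qed


lemma zero_spin: "(\<lambda>x. 0) \<in> spin_alg \<alpha> cm"
  by (auto simp: spin_alg_def intro!: exI[of _ "0::nat"])

lemma W0: "W_map cm 0 = (\<lambda>x. 0)"
  by (auto simp: W_map_def cm_simps zero_prod_def)

lemma zero_g: "(\<lambda>x. 0) \<in> spinW_alg \<alpha> cm"
proof -
  have e: "(\<lambda>x::'a\<times>'b. 0::'a\<times>'b) = (\<lambda>x. (\<lambda>x. 0) x + W_map cm 0 x)" using W0 by simp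
  show ?thesis unfolding spinW_alg_def W_space_def
    by (rule CollectI, rule exI[of _ "\<lambda>x. 0"], rule exI[of _ "W_map cm 0"]) (use zero_spin W0 in \<open>auto intro!: exI[of _ 0]\<close>)
qed

lemma zero_prol: "(\<lambda>_. 0) \<in> prolong (spinW_alg \<alpha> cm) (Suc 0)"
proof -
  have "(\<lambda>xs::('a\<times>'b) list. 0::'a\<times>'b) \<in> prolong (spinW_alg \<alpha> cm) 0"
    using zero_g by (auto intro!: bexI[of _ "\<lambda>x. 0"] split: list.split)
  thus ?thesis by (simp add: linear_zero)
qed

lemma g1_zero:
  assumes F: "F \<in> prolong (spinW_alg \<alpha> cm) (Suc 0)"
  shows "F = (\<lambda>_. 0)"
proof -
  have FF: "(\<forall>xs. length xs \<noteq> 0 + 2 \<longrightarrow> F xs = 0) \<and>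
      (\<forall>xs. linear (\<lambda>v. F (v # xs))) \<and>
      (\<forall>v. (\<lambda>xs. F (v # xs)) \<in> prolong (spinW_alg \<alpha> cm) 0) \<and>
      (\<forall>p q v w. v \<in> par_part p \<and> w \<in> par_part q \<longrightarrow>
          (\<lambda>xs. F (v # w # xs)) = (\<lambda>xs. (if p \<and> q then -1 else 1) *\<^sub>R F (w # v # xs)))"
    using F unfolding prolong.simps(2) mem_Collect_eq .
  have len: "\<And>xs. length xs \<noteq> 2 \<Longrightarrow> F xs = 0" using FF by simp
  have lin: "\<And>xs. linear (\<lambda>v. F (v # xs))" using FF by blast
  have p0: "\<And>v. (\<lambda>xs. F (v#xs)) \<in> prolong (spinW_alg \<alpha> cm) 0" using FF by blast
  have sy: "\<And>p q v w. v \<in> par_part p \<Longrightarrow> w \<in> par_part q \<Longrightarrow>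
      (\<lambda>xs. F (v # w # xs)) = (\<lambda>xs. (if p \<and> q then -1 else 1) *\<^sub>R F (w # v # xs))"
    using FF by blast
  have ex: "\<exists>S \<sigma>. spinP S \<and> (\<forall>u. F [v,u] = S u + W_map cm \<sigma> u)" for v
  proof -
    from p0[of v] obtain A where A: "A \<in> spinW_alg \<alpha> cm"
      "\<forall>xs. F (v#xs) = (case xs of [u] \<Rightarrow> A u | _ \<Rightarrow> 0)" by auto
    from A(1) obtain S B where SB: "A = (\<lambda>x. S x + B x)" "S \<in> spin_alg \<alpha> cm" "B \<in> W_space cm"
      by (auto simp: spinW_alg_def)
    from SB(3) obtain \<sigma> where \<sigma>: "B = W_map cm \<sigma>" by (auto simp: W_space_def)
    have "F [v,u] = S u + W_map cm \<sigma> u" for u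
      using A(2)[rule_format, of "[u]"] SB(1) \<sigma> by simp
    thus ?thesis using spinP_alg[OF SB(2)] by blast
  qed
  then obtain S \<sigma> where S\<sigma>: "\<And>v. spinP (S v)" "\<And>v u. F [v,u] = S v u + W_map cm (\<sigma> v) u"
    by metis
  define R where "R v u = fst (S v (u,0))" for v u
  define T where "T v t = snd (S v (0,t))" for v t
  have linS: "\<And>v. linear (S v)" and dec: "\<And>v u t. S v (u,t) = (R v u, T v t)"
    and ant: "\<And>v u u'. \<alpha> (R v u) u' = - \<alpha> u (R v u')"
    and trc: "\<And>v t. T v t = (1/4) *\<^sub>R (\<Sum>k\<in>Basis. cm (bd k) (cm (R v k) t))"
    using spinPD[OF S\<sigma>(1)] unfolding R_def T_def by metis+
  have S00: "S v (0,0) = 0" for v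
    using linear_0[OF linS[of v]] by (simp add: zero_prod_def)
  have R0: "R v 0 = 0" and T0: "T v 0 = 0" for v
    using S00[of v] dec[of v 0 0] by (simp_all add: zero_prod_def)
  have Gf: "F [v,(b,t)] = (R v b, cm b (\<sigma> v) + T v t)" for v b t
    by (simp add: S\<sigma>(2) dec W_map_def)
  have sEE: "F [(a,0),(b,0)] = F [(b,0),(a,0)]" for a b
  proof -
    have "(a,0) \<in> par_part False" "(b,0) \<in> par_part False" by (auto simp: par_part_def)
    from fun_cong[OF sy[OF this], of "[]"] show ?thesis by simp
  qed
  have sEO: "F [(a,0),(0,s)] = F [(0,s),(a,0)]" for a s
  proof -
    have "(a,0) \<in> par_part False" "(0,s) \<in> par_part True" by (auto simp: par_part_def)
    from fun_cong[OF sy[OF this], of "[]"] show ?thesis by simp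
  qed
  have A1: "R (0,s) a = 0" and A2: "T (a,0) s = cm a (\<sigma> (0,s))" for a s
    using sEO[of a s] by (simp_all add: Gf R0 T0 cm_simps)
  have B: "T (0,s) t = 0" for s t
    by (simp add: trc A1 cm_simps)
  define phi where "phi a b c = \<alpha> (R (a,0) b) c" for a b c
  have ph1: "phi a b c = phi b a c" for a b c
    using sEE[of a b] by (simp add: Gf T0 R0 phi_def)
  have ph2: "phi a b c = - phi a c b" for a b c
    unfolding phi_def using ant[of "(a,0)" b c] asym[of b] by simp
  have ph0: "phi a b c = 0" for a b c
  proof -
    have "phi a b c = - phi a c b" by (rule ph2)
    also have "\<dots> = - phi c a b" by (simp add: ph1[of a c])
    also have "\<dots> = phi c b a" by (simp add: ph2[of c a b])
    also have "\<dots> = phi b c a" by (simp add: ph1[of c b])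
    also have "\<dots> = - phi b a c" by (simp add: ph2[of b c a])
    also have "\<dots> = - phi a b c" by (simp add: ph1[of b a])
    finally show ?thesis by simp
  qed
  have C: "R (a,0) b = 0" for a b
    by (rule nd') (use ph0 in \<open>simp add: phi_def\<close>)
  have D: "T (a,0) t = 0" for a t
    by (simp add: trc C cm_simps)
  have sig_o: "\<sigma> (0,s) = 0" for s
    by (rule cm_inj) (use A2 D in metis)
  define sg where "sg a = \<sigma> (a,0)" for a
  have h: "cm b (sg a) = cm a (sg b)" for a b
    using sEE[of a b] by (simp add: Gf T0 R0 sg_def)
  have hb: "snd (F [(a,0),(b,0)]) = cm b (sg a)" for a b
    by (simp add: Gf T0 R0 sg_def)
  have sg_lin: "linear sg"
  proof (rule linearI)
    fix x y
    show "sg (x + y) = sg x + sg y"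
    proof -
      have "cm b (sg (x + y) - (sg x + sg y)) = 0" for b
      proof -
        have "F [(x+y,0),(b,0)] = F [(x,0),(b,0)] + F [(y,0),(b,0)]"
          using linear_add[OF lin[of "[(b,0)]"], of "(x,0)" "(y,0)"] by simp
        hence "snd (F [(x+y,0),(b,0)]) = snd (F [(x,0),(b,0)]) + snd (F [(y,0),(b,0)])" by simp
        thus ?thesis by (simp add: hb cm_simps)
      qed
      hence "sg (x + y) - (sg x + sg y) = 0" by (rule cm_inj)
      thus ?thesis by simp
    qed
  next
    fix c x
    show "sg (c *\<^sub>R x) = c *\<^sub>R sg x"
    proof -
      have "cm b (sg (c *\<^sub>R x) - c *\<^sub>R sg x) = 0" for b
      proof -
        have "F [(c *\<^sub>R x,0),(b,0)] = c *\<^sub>R F [(x,0),(b,0)]"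
          using linear_scale[OF lin[of "[(b,0)]"], of c "(x,0)"] by simp
        hence "snd (F [(c *\<^sub>R x,0),(b,0)]) = c *\<^sub>R snd (F [(x,0),(b,0)])" by simp
        thus ?thesis by (simp add: hb cm_simps)
      qed
      hence "sg (c *\<^sub>R x) - c *\<^sub>R sg x = 0" by (rule cm_inj)
      thus ?thesis by simp
    qed
  qed
  define \<omega> where "\<omega> = (\<Sum>k\<in>Basis. cm (bd k) (sg k))"
  have E1: "cm x \<omega> = (real DIM('a) - 2) *\<^sub>R sg x" for x
  proof -
    have "cm x \<omega> = (\<Sum>k\<in>Basis. cm x (cm (bd k) (sg k)))" by (simp add: \<omega>_def cm_sum2)
    also have "\<dots> = (\<Sum>k\<in>Basis. - cm (bd k) (cm k (sg x)) - (2 * \<alpha> x (bd k)) *\<^sub>R sg k)"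
    proof (rule sum.cong)
      fix k
      have "cm x (cm (bd k) (sg k)) = - cm (bd k) (cm x (sg k)) - (2 * \<alpha> x (bd k)) *\<^sub>R sg k"
        using anti[of x "bd k" "sg k"] by (simp add: algebra_simps eq_neg_iff_add_eq_0)
      thus "cm x (cm (bd k) (sg k)) = - cm (bd k) (cm k (sg x)) - (2 * \<alpha> x (bd k)) *\<^sub>R sg k"
        by (simp add: h[of k x])
    qed simp
    also have "\<dots> = - (\<Sum>k\<in>Basis. cm (bd k) (cm k (sg x))) - 2 *\<^sub>R sg (\<Sum>k\<in>Basis. \<alpha> x (bd k) *\<^sub>R k)"
      by (simp add: sum_subtractf sum_negf linear_sum[OF sg_lin] linear_scale[OF sg_lin]
          scaleR_sum_right)
    also have "\<dots> = (real DIM('a) - 2) *\<^sub>R sg x"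
      by (simp add: clif_trace D2 algebra_simps)
    finally show ?thesis .
  qed
  have E2: "cm y (cm x \<omega>) = cm x (cm y \<omega>)" for x y
    by (simp add: E1 cm_simps h[of x y])
  have E3: "cm x (cm y \<omega>) = - (\<alpha> x y) *\<^sub>R \<omega>" for x y
  proof -
    have "2 *\<^sub>R cm x (cm y \<omega>) = - (2 * \<alpha> x y) *\<^sub>R \<omega>"
      using anti[of x y \<omega>] E2[of y x] by (simp add: scaleR_2)
    hence "(1/2::real) *\<^sub>R (2 *\<^sub>R cm x (cm y \<omega>)) = (1/2::real) *\<^sub>R (- (2 * \<alpha> x y) *\<^sub>R \<omega>)" by simp
    thus ?thesis by simp
  qed
  have E4: "cm y \<omega> = 0" for y
  proof -
    let ?Q = "(\<Sum>k\<in>Basis. cm (bd k) (cm y (cm k \<omega>)))"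
    have "?Q = (\<Sum>k\<in>Basis. - cm (bd k) (cm k (cm y \<omega>)) - (2 * \<alpha> y k) *\<^sub>R cm (bd k) \<omega>)"
    proof (rule sum.cong)
      fix k
      have "cm y (cm k \<omega>) = - cm k (cm y \<omega>) - (2 * \<alpha> y k) *\<^sub>R \<omega>"
        using anti[of y k \<omega>] by (simp add: algebra_simps eq_neg_iff_add_eq_0)
      thus "cm (bd k) (cm y (cm k \<omega>)) = - cm (bd k) (cm k (cm y \<omega>)) - (2 * \<alpha> y k) *\<^sub>R cm (bd k) \<omega>"
        by (simp add: cm_simps)
    qed simp
    also have "\<dots> = - (\<Sum>k\<in>Basis. cm (bd k) (cm k (cm y \<omega>))) - 2 *\<^sub>R cm (\<Sum>k\<in>Basis. \<alpha> y k *\<^sub>R bd k) \<omega>"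
      by (simp add: sum_subtractf sum_negf cm_sum1 cm_simps scaleR_sum_right)
    also have "\<dots> = (real DIM('a) - 2) *\<^sub>R cm y \<omega>"
      by (simp add: clif_trace D1 algebra_simps)
    finally have q1: "?Q = (real DIM('a) - 2) *\<^sub>R cm y \<omega>" .
    have "?Q = (\<Sum>k\<in>Basis. - (\<alpha> y k *\<^sub>R cm (bd k) \<omega>))"
      by (rule sum.cong) (simp_all add: E3 cm_simps)
    also have "\<dots> = - cm (\<Sum>k\<in>Basis. \<alpha> y k *\<^sub>R bd k) \<omega>"
      by (simp add: sum_negf cm_sum1 cm_simps)
    also have "\<dots> = - cm y \<omega>" by (simp add: D1)
    finally have "(real DIM('a) - 2) *\<^sub>R cm y \<omega> = - cm y \<omega>" using q1 by simp
    moreover have "(real DIM('a) - 1) *\<^sub>R cm y \<omega> = (real DIM('a) - 2) *\<^sub>R cm y \<omega> + 1 *\<^sub>R cm y \<omega>"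
      unfolding scaleR_add_left[symmetric] by simp
    ultimately have "(real DIM('a) - 1) *\<^sub>R cm y \<omega> = 0" by simp
    thus ?thesis using nn_ge by simp
  qed
  have om0: "\<omega> = 0" by (rule cm_inj) (rule E4)
  have sg0: "sg x = 0" for x
  proof -
    have "(real DIM('a) - 2) *\<^sub>R sg x = 0" using E1[of x] om0 by (simp add: cm_simps)
    thus ?thesis using nn_ge by simp
  qed
  have all2: "F [(a,s),(b,t)] = 0" for a s b t
  proof -
    have "F [(a,s),(b,t)] = F [(a,0),(b,t)] + F [(0,s),(b,t)]"
      using linear_add[OF lin[of "[(b,t)]"], of "(a,0)" "(0,s)"] by simp
    also have "\<dots> = 0"
      using sg0[of a] unfolding sg_def
      by (simp add: Gf T0 R0 C D A1 B sig_o cm_simps zero_prod_def)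
    finally show ?thesis .
  qed
  show ?thesis
  proof
    fix xs :: "('a \<times> 'b) list"
    show "F xs = 0"
    proof (cases "length xs = 2")
      case True
      then obtain x y where "xs = [x,y]"
        by (metis (no_types, lifting) One_nat_def Suc_1 length_0_conv length_Suc_conv)
      thus ?thesis using all2[of "fst x" "snd x" "fst y" "snd y"] by simp
    next
      case False thus ?thesis by (rule len)
    qed
  qed
qed

lemma finite: "finite_type (spinW_alg \<alpha> cm)"
  unfolding finite_type_def
  by (rule exI[of _ "Suc 0"]) (use zero_prol g1_zero in blast)

end

theorem mainTheorem5:
  fixes \<alpha> :: "'a::euclidean_space \<Rightarrow> 'a \<Rightarrow> real"
    and cm :: "'a \<Rightarrow> 'b::real_vector \<Rightarrow> 'b"
  assumes "bilinear \<alpha>" and "symmetric_form \<alpha>" and "nondegenerate_form \<alpha>"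
    and "finite_dim_space TYPE('b)"
    and "clifford_module \<alpha> cm"
    and "DIM('a) \<ge> 3"
  shows "finite_type (spinW_alg \<alpha> cm)"
proof -
  interpret cliff \<alpha> cm using assms by (simp add: cliff_def)
  show ?thesis by (rule finite)
qed

end
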